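(* Let $n\ge2$ and let $I$ be an ideal of $\Phi_{A_{n-1}}$ such that $I^c$ is full. Let $A^{(1)}|\dots|A^{(r)}$ be the partition of $[n]$ in accordance with $I$. Then for $1\le x<y\le n$, one has $e_x-e_y\in I^c$ if and only if either $x$ and $y$ lie in the same block $A^{(u)}$, or $x\in A^{(u)}$, $y\in A^{(v)}$ with $u\ne v$ and $s_I(A^{(u)})\cap s_I(A^{(v)})\neq\emptyset$. Equivalently, identifying $e_x-e_y$ with the pair $\{x,y\}$, $$I^c=\bigsqcup_{u=1}^r\Big(\binom{A^{(u)}}{2}\ \sqcup\ \bigsqcup_{v\in R^{(u)}}\big\{\{x,y\}: x\in A^{(u)},\,y\in A^{(v)}\big\}\Big),$$ where $R^{(u)}=\{v\in\{u+1,\dots,r\}: s_I(A^{(u)})\cap s_I(A^{(v)})\ne\emptyset\}$.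
   Context: $\Phi^+_{A_{n-1}}=\{e_i-e_j:1\le i<j\le n\}$ with simple roots $e_i-e_{i+1}$, $i\in[n-1]$. The partial order $\preceq$ on $\Phi^+_{A_{n-1}}$: $u\preceq v$ iff $v-u$ is a nonnegative integer combination of simple roots; concretely $e_i-e_j\preceq e_{i'}-e_{j'}$ iff $i'\le i$ and $j\le j'$. An ideal is a subset $I\subseteq\Phi^+_{A_{n-1}}$ with $u\in I$, $u\preceq v\Rightarrow v\in I$; $I^c=\Phi^+_{A_{n-1}}\setminus I$. $I^c$ is full if it contains every simple root $e_i-e_{i+1}$. Let $e_{i_1}-e_{j_1},\dots,e_{i_k}-e_{j_k}$ be the maximal elements of $I^c$ (the generators). The signature of $u\in[n]$ is $s_I(u)=\{l\in[k]: i_l\le u\le j_l\}$. The partition of $[n]$ in accordance with $I$ is the partition $A^{(1)}|\dots|A^{(r)}$ into the maximal nonempty subsets on which $s_I$ is constant, indexed so that $\min A^{(1)}<\dots<\min A^{(r)}$; $s_I(A^{(u)})$ denotes the common value of $s_I$ on $A^{(u)}$. *)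

theory Defs
  imports Main
begin

text \<open>Positive roots of type A_{n-1}: the root e_i - e_j (1 <= i < j <= n) is
  represented by the pair (i, j).\<close>
definition pos_roots :: "nat \<Rightarrow> (nat \<times> nat) set" where
  "pos_roots n = {(i, j). 1 \<le> i \<and> i < j \<and> j \<le> n}"

definition root_le :: "nat \<times> nat \<Rightarrow> nat \<times> nat \<Rightarrow> bool" where
  "root_le u v \<longleftrightarrow> fst v \<le> fst u \<and> snd u \<le> snd v"

definition is_ideal :: "nat \<Rightarrow> (nat \<times> nat) set \<Rightarrow> bool" where
  "is_ideal n I \<longleftrightarrow> I \<subseteq> pos_roots n \<and>
     (\<forall>u\<in>I. \<forall>v\<in>pos_roots n. root_le u v \<longrightarrow> v \<in> I)"

definition compl_ideal :: "nat \<Rightarrow> (nat \<times> nat) set \<Rightarrow> (nat \<times> nat) set" where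
  "compl_ideal n I = pos_roots n - I"

definition is_full :: "nat \<Rightarrow> (nat \<times> nat) set \<Rightarrow> bool" where
  "is_full n I \<longleftrightarrow> (\<forall>i. 1 \<le> i \<and> i \<le> n - 1 \<longrightarrow> (i, i + 1) \<in> compl_ideal n I)"

definition generators :: "nat \<Rightarrow> (nat \<times> nat) set \<Rightarrow> (nat \<times> nat) set" where
  "generators n I = {g \<in> compl_ideal n I.
     \<forall>v\<in>compl_ideal n I. root_le g v \<longrightarrow> v = g}"

text \<open>Signature of u: the set of generators e_{i_l} - e_{j_l} with i_l <= u <= j_l
  (the generators themselves serve as the index set [k]).\<close>
definition signature :: "nat \<Rightarrow> (nat \<times> nat) set \<Rightarrow> nat \<Rightarrow> (nat \<times> nat) set" where
  "signature n I u = {g \<in> generators n I. fst g \<le> u \<and> u \<le> snd g}"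

definition sig_const :: "nat \<Rightarrow> (nat \<times> nat) set \<Rightarrow> nat set \<Rightarrow> bool" where
  "sig_const n I B \<longleftrightarrow> (\<forall>x\<in>B. \<forall>y\<in>B. signature n I x = signature n I y)"

definition blocks :: "nat \<Rightarrow> (nat \<times> nat) set \<Rightarrow> nat set set" where
  "blocks n I = {B. B \<noteq> {} \<and> B \<subseteq> {1..n} \<and> sig_const n I B \<and>
     (\<forall>B'. B \<subseteq> B' \<and> B' \<subseteq> {1..n} \<and> sig_const n I B' \<longrightarrow> B' = B)}"

end

theory Submission
  imports Defs
begin

lemma downclosed:
  assumes "is_ideal n I" "v \<in> compl_ideal n I" "u \<in> pos_roots n" "root_le u v"
  shows "u \<in> compl_ideal n I"
  using assms unfolding is_ideal_def compl_ideal_def by blast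

lemma gen_above:
  assumes "is_ideal n I" "u \<in> compl_ideal n I"
  shows "\<exists>g\<in>generators n I. root_le u g"
proof -
  let ?P = "\<lambda>v. v \<in> compl_ideal n I \<and> root_le u v"
  let ?f = "\<lambda>v::nat\<times>nat. snd v + (n - fst v)"
  have b: "\<forall>v. ?P v \<longrightarrow> ?f v \<le> 2*n"
  proof (intro allI impI)
    fix v assume "?P v"
    hence "snd v \<le> n" unfolding compl_ideal_def pos_roots_def by (cases v) simp
    thus "?f v \<le> 2*n" by simp
  qed
  have Pu: "?P u" using assms(2) by (simp add: root_le_def)
  have b': "\<forall>v. ?P v \<longrightarrow> ?f v < 2*n+1" using b by (simp add: less_Suc_eq_le)
  obtain g where g: "?P g" "\<forall>w. ?P w \<longrightarrow> ?f w \<le> ?f g"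
    using ex_has_greatest_nat[of ?P u ?f "2*n+1", OF Pu b'] by blast
  have "g \<in> generators n I"
    unfolding generators_def
  proof (intro CollectI conjI ballI impI)
    show "g \<in> compl_ideal n I" using g by simp
    fix w assume w: "w \<in> compl_ideal n I" "root_le g w"
    hence "?P w" using g(1) by (auto simp: root_le_def)
    hence "?f w \<le> ?f g" using g(2) by blast
    moreover have "fst w \<le> n" "fst g \<le> n" using w g(1)
      by (auto simp: compl_ideal_def pos_roots_def)
    moreover have "fst w \<le> fst g" "snd g \<le> snd w" using w(2) unfolding root_le_def by auto
    ultimately have "fst w = fst g" "snd w = snd g" by linarith+
    thus "w = g" by (simp add: prod_eq_iff)
  qed
  thus ?thesis using g by blast
qed

lemma key:
  assumes "is_ideal n I" "1 \<le> x" "x < y" "y \<le> n"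
  shows "(x, y) \<in> compl_ideal n I \<longleftrightarrow> signature n I x \<inter> signature n I y \<noteq> {}"
proof
  assume "(x, y) \<in> compl_ideal n I"
  then obtain g where "g \<in> generators n I" "root_le (x,y) g" using gen_above assms by blast
  thus "signature n I x \<inter> signature n I y \<noteq> {}"
    using assms unfolding signature_def root_le_def by auto
next
  assume "signature n I x \<inter> signature n I y \<noteq> {}"
  then obtain g where g: "g \<in> generators n I" "fst g \<le> x" "y \<le> snd g"
    unfolding signature_def by auto
  have "g \<in> compl_ideal n I" using g unfolding generators_def by auto
  moreover have "(x,y) \<in> pos_roots n" using assms by (simp add: pos_roots_def)
  ultimately show "(x, y) \<in> compl_ideal n I"
    using downclosed[OF assms(1)] g by (auto simp: root_le_def)
qed

lemma sig_ne:
  assumes "n \<ge> 2" "is_ideal n I" "is_full n I" "1 \<le> z" "z \<le> n"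
  shows "signature n I z \<noteq> {}"
proof (cases "z < n")
  case True
  hence "(z, z+1) \<in> compl_ideal n I" using assms unfolding is_full_def by auto
  moreover have "1 \<le> z" "z < z+1" "z+1 \<le> n" using assms(4) True by auto
  ultimately show ?thesis using key[OF assms(2), of z "z+1"] by blast
next
  case False
  hence zn: "z = n" using assms by simp
  have "1 \<le> z - 1 \<and> z - 1 \<le> n - 1" using zn assms by simp
  hence "(z-1, z-1+1) \<in> compl_ideal n I" using assms(3) unfolding is_full_def by blast
  moreover have "z-1+1 = z" using zn assms by simp
  ultimately have "(z-1, z) \<in> compl_ideal n I" by simp
  moreover have "1 \<le> z - 1" "z - 1 < z" "z \<le> n" using zn assms(1) by auto
  ultimately show ?thesis using key[OF assms(2), of "z-1" z] by blast
qed

lemma level_block: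
  assumes "1 \<le> z" "z \<le> n"
  shows "{w\<in>{1..n}. signature n I w = signature n I z} \<in> blocks n I"
proof -
  let ?L = "{w\<in>{1..n}. signature n I w = signature n I z}"
  have 1: "?L \<noteq> {}" using assms by auto
  have 2: "?L \<subseteq> {1..n}" by blast
  have 3: "sig_const n I ?L" unfolding sig_const_def by simp
  have 4: "B' = ?L" if "?L \<subseteq> B'" "B' \<subseteq> {1..n}" "sig_const n I B'" for B'
  proof
    have zB: "z \<in> B'" using that(1) assms by auto
    show "B' \<subseteq> ?L"
    proof
      fix w assume "w \<in> B'"
      thus "w \<in> ?L" using that(2,3) zB unfolding sig_const_def by blast
    qed
  qed (rule that(1))
  show ?thesis unfolding blocks_def using 1 2 3 4 by blast
qed

theorem mainTheorem10:
  fixes n :: nat and I :: "(nat \<times> nat) set"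
  assumes "n \<ge> 2" and "is_ideal n I" and "is_full n I"
    and "1 \<le> x" and "x < y" and "y \<le> n"
  shows "(x, y) \<in> compl_ideal n I \<longleftrightarrow>
    ((\<exists>B\<in>blocks n I. x \<in> B \<and> y \<in> B) \<or>
     (\<exists>B\<in>blocks n I. \<exists>C\<in>blocks n I. B \<noteq> C \<and> x \<in> B \<and> y \<in> C \<and>
        (\<forall>b\<in>B. \<forall>c\<in>C. signature n I b \<inter> signature n I c \<noteq> {})))"
  (is "?L \<longleftrightarrow> ?R")
proof
  assume L: ?L
  have ne: "signature n I x \<inter> signature n I y \<noteq> {}" using key[OF assms(2,4,5,6)] L by blast
  define B where "B = {w\<in>{1..n}. signature n I w = signature n I x}"
  define C where "C = {w\<in>{1..n}. signature n I w = signature n I y}"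
  have Bb: "B \<in> blocks n I" "C \<in> blocks n I" unfolding B_def C_def
    using level_block[of x n I] level_block[of y n I] assms by auto
  have xy: "x \<in> B" "y \<in> C" using assms by (auto simp: B_def C_def)
  show ?R
  proof (cases "B = C")
    case True thus ?thesis using Bb xy by blast
  next
    case False
    have "\<forall>b\<in>B. \<forall>c\<in>C. signature n I b \<inter> signature n I c \<noteq> {}"
      using ne by (auto simp: B_def C_def)
    thus ?thesis using Bb xy False by blast
  qed
next
  assume ?R
  thus ?L
  proof
    assume "\<exists>B\<in>blocks n I. x \<in> B \<and> y \<in> B"
    hence "signature n I x = signature n I y"
      unfolding blocks_def sig_const_def by blast
    moreover have "signature n I x \<noteq> {}" using sig_ne[OF assms(1,2,3,4)] assms(5,6) by simp
    ultimately show ?L using key[OF assms(2,4,5,6)] by auto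
  next
    assume "\<exists>B\<in>blocks n I. \<exists>C\<in>blocks n I. B \<noteq> C \<and> x \<in> B \<and> y \<in> C \<and>
        (\<forall>b\<in>B. \<forall>c\<in>C. signature n I b \<inter> signature n I c \<noteq> {})"
    hence "signature n I x \<inter> signature n I y \<noteq> {}" by blast
    thus ?L using key[OF assms(2,4,5,6)] by blast
  qed
qed

end
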